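(* For every polynomial $F$ with real coefficients and every sufficiently large integer $N$, there exists a completely multiplicative function $f=f_{F,N}:\mathbb{N}\to\mathbb{C}$ with $|f(n)|\le1$ for all $n$ such that $$\left|\sum_{1\le n\le N}f(n)e(F(n))\right|\ge\frac1{10}\frac N{\log N}.$$
   Context: $e(x)=\exp(2\pi ix)$. A function is completely multiplicative if $f(1)=1$ and $f(mn)=f(m)f(n)$ for all $m,n$. *)

theory Defs
  imports "HOL-Analysis.Analysis" "HOL-Computational_Algebra.Polynomial"
begin

definition e :: "real \<Rightarrow> complex" where
  "e x = exp (2 * of_real pi * \<i> * of_real x)"

definition completely_multiplicative :: "(nat \<Rightarrow> complex) \<Rightarrow> bool" where
  "completely_multiplicative f \<longleftrightarrow>
     f 1 = 1 \<and> (\<forall>m n. m > 0 \<longrightarrow> n > 0 \<longrightarrow> f (m * n) = f m * f n)"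

end

theory Submission imports Defs "HOL-Computational_Algebra.Primes" "HOL-Real_Asymp.Real_Asymp"
begin

lemma Suc_div_split:
  fixes n d :: nat
  assumes "0 < d"
  shows "Suc n div d = n div d + (if d dvd Suc n then 1 else 0)"
  using assms by (simp add: div_Suc dvd_eq_mod_eq_0)

lemma card_filter_sum:
  assumes "finite A"
  shows "card {x\<in>A. P x} = (\<Sum>x\<in>A. if P x then 1 else (0::nat))"
proof -
  have "card {x\<in>A. P x} = (\<Sum>x\<in>{x\<in>A. P x}. 1)" by (rule card_eq_sum)
  also have "\<dots> = (\<Sum>x\<in>A. if P x then 1 else 0)" by (rule sum.inter_filter) (rule assms)
  finally show ?thesis .
qed

lemma legendre:
  assumes p: "prime (p::nat)"
  shows "multiplicity p (fact n) = (\<Sum>j\<in>{1..n}. n div p^j)"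
proof (induction n)
  case 0 show ?case by simp
next
  case (Suc n)
  have p1: "p > 1" using prime_gt_1_nat p by blast
  have "fact (Suc n) = Suc n * (fact n :: nat)" by simp
  hence "multiplicity p (fact (Suc n) :: nat) = multiplicity p (Suc n) + multiplicity p (fact n :: nat)"
    using prime_elem_multiplicity_mult_distrib[of p "Suc n" "fact n :: nat"] p
    by (simp add: fact_nonzero prime_imp_prime_elem)
  also have "multiplicity p (Suc n) = card {j\<in>{1..Suc n}. p^j dvd Suc n}"
  proof -
    define m where "m = multiplicity p (Suc n)"
    have pd: "\<And>j. p^j dvd Suc n \<longleftrightarrow> j \<le> m"
      unfolding m_def by (rule power_dvd_iff_le_multiplicity) (use p1 in auto)
    have "p ^ m dvd Suc n" using pd by simp
    hence "p ^ m \<le> Suc n" by (rule dvd_imp_le) simp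
    moreover have "m < 2 ^ m" by (rule less_exp)
    moreover have "2 ^ m \<le> p ^ m" using p1 by (intro power_mono) auto
    ultimately have mle: "m \<le> Suc n" by linarith
    have "x \<in> {j\<in>{1..Suc n}. p^j dvd Suc n} \<longleftrightarrow> x \<in> {1..m}" for x
      using mle by (simp only: mem_Collect_eq atLeastAtMost_iff pd) presburger
    hence "{j\<in>{1..Suc n}. p^j dvd Suc n} = {1..m}" by blast
    thus ?thesis by (simp add: m_def)
  qed
  also have "\<dots> = (\<Sum>j\<in>{1..Suc n}. if p^j dvd Suc n then 1 else 0)"
    by (rule card_filter_sum) simp
  finally have A: "multiplicity p (fact (Suc n) :: nat) = (\<Sum>j\<in>{1..Suc n}. if p^j dvd Suc n then 1 else 0) + (\<Sum>j\<in>{1..n}. n div p^j)"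
    using Suc by simp
  have "n < 2 ^ Suc n" using less_exp[of "Suc n"] by linarith
  also have "2 ^ Suc n \<le> p ^ Suc n" using p1 by (intro power_mono) auto
  finally have z: "n div p ^ Suc n = 0" by simp
  have "(\<Sum>j\<in>{1..Suc n}. Suc n div p^j) = (\<Sum>j\<in>{1..Suc n}. n div p^j + (if p^j dvd Suc n then 1 else 0))"
    using p1 by (intro sum.cong refl Suc_div_split) simp
  also have "\<dots> = (\<Sum>j\<in>{1..Suc n}. n div p^j) + (\<Sum>j\<in>{1..Suc n}. if p^j dvd Suc n then 1 else 0)"
    by (rule sum.distrib)
  also have "(\<Sum>j\<in>{1..Suc n}. n div p^j) = (\<Sum>j\<in>{1..n}. n div p^j)"
    using z by (simp add: sum.cl_ivl_Suc)
  finally show ?case using A by simp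
qed

lemma div2_bound:
  fixes n d :: nat
  assumes "0 < d"
  shows "2*n div d \<le> 2*(n div d) + (if d \<le> 2*n then 1 else 0)"
proof (cases "d \<le> 2*n")
  case False then show ?thesis by simp
next
  case True
  have r: "n mod d < d" using assms by simp
  have s: "d*(n div d) + n mod d = n" by simp
  have "2*n < 2*(d*(n div d)) + 2*d" using r s by linarith
  also have "\<dots> = (2*(n div d)+2) * d" by (simp add: algebra_simps)
  finally have "2*n < (2*(n div d)+2) * d" .
  hence "2*n div d < 2*(n div d)+2" using assms by (simp add: div_less_iff_less_mult)
  then show ?thesis using True by simp
qed

lemma central_mult:
  assumes p: "prime (p::nat)" and n: "n > 0"
  shows "p ^ multiplicity p ((2*n) choose n) \<le> 2*n"
proof -
  define C where "C = (2*n) choose n"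
  define v where "v = multiplicity p C"
  define K where "K = {j\<in>{1..2*n}. p^j \<le> 2*n}"
  have p1: "p > 1" using prime_gt_1_nat p by blast
  have Cpos: "C > 0" unfolding C_def by simp
  have "fact n * fact (2*n - n) * C = (fact (2*n) :: nat)" unfolding C_def by (rule binomial_fact_lemma) simp
  hence eq: "fact (2*n) = C * (fact n * fact n :: nat)" by (simp add: mult_ac)
  have "multiplicity p (fact (2*n) :: nat) = v + (multiplicity p (fact n::nat) + multiplicity p (fact n::nat))"
    unfolding eq v_def using p Cpos
    by (simp add: prime_elem_multiplicity_mult_distrib fact_nonzero prime_imp_prime_elem)
  hence S: "(\<Sum>j\<in>{1..2*n}. 2*n div p^j) = v + 2*(\<Sum>j\<in>{1..n}. n div p^j)"
    by (simp add: legendre[OF p])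
  have ext: "(\<Sum>j\<in>{1..n}. n div p^j) = (\<Sum>j\<in>{1..2*n}. n div p^j)"
  proof (rule sum.mono_neutral_left)
    show "\<forall>i\<in>{1..2*n} - {1..n}. n div p^i = 0"
    proof
      fix i assume "i \<in> {1..2*n} - {1..n}"
      then have ni: "n < i" by auto
      have "i < 2^i" by (rule less_exp)
      also have "2^i \<le> p^i" using p1 by (intro power_mono) auto
      finally have "n < p^i" using ni by linarith
      then show "n div p^i = 0" by simp
    qed
  qed auto
  have "(\<Sum>j\<in>{1..2*n}. 2*n div p^j) \<le> (\<Sum>j\<in>{1..2*n}. 2*(n div p^j) + (if p^j \<le> 2*n then 1 else 0))"
    by (rule sum_mono, rule div2_bound) (use p1 in simp)
  also have "\<dots> = 2*(\<Sum>j\<in>{1..2*n}. n div p^j) + (\<Sum>j\<in>{1..2*n}. if p^j \<le> 2*n then 1 else 0)"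
    by (simp add: sum.distrib sum_distrib_left)
  also have "(\<Sum>j\<in>{1..2*n}. if p^j \<le> 2*n then 1 else 0) = card K"
    unfolding K_def by (rule card_filter_sum[symmetric]) simp
  finally have vK: "v \<le> card K" using S ext by linarith
  show ?thesis
  proof (rule ccontr)
    assume "\<not> p ^ multiplicity p ((2*n) choose n) \<le> 2*n"
    hence lt: "2*n < p^v" by (simp add: v_def C_def)
    have "K \<subseteq> {1..<v}"
    proof
      fix j assume "j \<in> K"
      hence j: "1 \<le> j" "p^j \<le> 2*n" by (auto simp: K_def)
      hence "p^j < p^v" using lt by linarith
      hence "j < v" using p1 power_less_imp_less_exp by blast
      thus "j \<in> {1..<v}" using j by auto
    qed
    hence "card K \<le> v - 1" using card_mono[of "{1..<v}" K] by simp
    moreover have "v \<noteq> 0" using lt n by (cases v) auto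
    ultimately show False using vK by linarith
  qed
qed

lemma cheb_nat:
  assumes n: "n > 0"
  shows "(2*n) choose n \<le> (2*n) ^ card {p. prime p \<and> p \<le> 2*n}"
proof -
  define C where "C = (2*n) choose n"
  have Cpos: "C > 0" unfolding C_def by simp
  have "C = (\<Prod>p\<in>prime_factors C. p ^ multiplicity p C)" by (rule prime_factorization_nat[OF Cpos])
  also have "\<dots> \<le> (\<Prod>p\<in>prime_factors C. 2*n)"
  proof (rule prod_mono)
    fix p assume "p \<in> prime_factors C"
    hence pp: "prime p" by (rule in_prime_factors_imp_prime)
    show "0 \<le> p ^ multiplicity p C \<and> p ^ multiplicity p C \<le> 2*n"
      using central_mult[OF pp n] by (simp add: C_def)
  qed
  also have "\<dots> = (2*n)^card (prime_factors C)" by simp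
  also have "\<dots> \<le> (2*n)^card {p. prime p \<and> p \<le> 2*n}"
  proof (rule power_increasing)
    show "card (prime_factors C) \<le> card {p. prime p \<and> p \<le> 2*n}"
    proof (rule card_mono)
      show "finite {p. prime p \<and> p \<le> 2*n}" by (rule finite_subset[of _ "{..2*n}"]) auto
      show "prime_factors C \<subseteq> {p. prime p \<and> p \<le> 2*n}"
      proof
        fix p assume pC: "p \<in> prime_factors C"
        hence pp: "prime p" and m: "multiplicity p C > 0"
          by (auto simp: prime_factors_multiplicity)
        have "p = p ^ 1" by simp
        also have "\<dots> \<le> p ^ multiplicity p C"
          using m prime_gt_1_nat[OF pp] by (intro power_increasing) auto
        also have "\<dots> \<le> 2*n" unfolding C_def by (rule central_mult[OF pp n])
        finally show "p \<in> {p. prime p \<and> p \<le> 2*n}" using pp by simp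
      qed
    qed
  qed (use n in simp)
  finally show ?thesis by (simp add: C_def)
qed

lemma cheb_real:
  assumes n: "n > 0"
  shows "real n * ln 4 - ln (2 * real n) \<le> real (card {p. prime p \<and> p \<le> 2*n}) * ln (2 * real n)"
proof -
  define k where "k = card {p. prime p \<and> p \<le> 2*n}"
  have "4^n / (2 * real n) \<le> real ((2*n) choose n)" by (rule central_binomial_lower_bound[OF n])
  also have "\<dots> \<le> real ((2*n)^k)" unfolding k_def using cheb_nat[OF n] by (simp only: of_nat_le_iff)
  finally have "4^n / (2 * real n) \<le> (2 * real n)^k" by simp
  hence "ln (4^n / (2 * real n)) \<le> ln ((2 * real n)^k)"
    using n by (subst ln_le_cancel_iff) auto
  moreover have "ln (4^n / (2 * real n)) = ln (4^n) - ln (2 * real n)" by (rule ln_divide_pos) (use n in auto)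
  moreover have "ln ((4::real)^n) = real n * ln 4" by (rule ln_realpow)
  moreover have "ln ((2 * real n)^k) = real k * ln (2 * real n)" by (rule ln_realpow)
  ultimately show ?thesis unfolding k_def by linarith
qed

definition cmf :: "(nat \<Rightarrow> complex) \<Rightarrow> nat \<Rightarrow> complex" where
  "cmf g n = prod_mset (image_mset g (prime_factorization n))"

lemma cmf_cm: "completely_multiplicative (cmf g)"
  unfolding completely_multiplicative_def cmf_def by (simp add: prime_factorization_mult)

lemma norm_prod_mset_le:
  fixes g :: "nat \<Rightarrow> complex"
  assumes "\<forall>p. norm (g p) \<le> (1::real)"
  shows "norm (prod_mset (image_mset g M)) \<le> 1"
  using assms by (induction M) (auto simp: norm_mult intro!: mult_le_one)

theorem mainTheorem17:
  fixes F :: "real poly"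
  shows "\<exists>N0::nat. \<forall>N\<ge>N0. \<exists>f :: nat \<Rightarrow> complex.
           completely_multiplicative f \<and> (\<forall>n>0. norm (f n) \<le> 1) \<and>
           norm (\<Sum>n=1..N. f n * e (poly F (real n))) \<ge> (1/10) * (real N / ln (real N))"
proof -
  have ev: "eventually (\<lambda>x::real. x/10 \<le> (x-1)/2 - ln x - (sqrt x + 2) * ln x) at_top"
    by real_asymp
  then obtain X where X: "\<And>x. x \<ge> X \<Longrightarrow> x/10 \<le> (x-1)/2 - ln x - (sqrt x + 2) * ln x"
    by (auto simp: eventually_at_top_linorder)
  show ?thesis
  proof (rule exI[where x="max 3 (nat \<lceil>X\<rceil>)"], intro allI impI)
    fix N :: nat assume NN: "max 3 (nat \<lceil>X\<rceil>) \<le> N"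
    hence N3: "3 \<le> N" by simp
    have "X \<le> real (nat \<lceil>X\<rceil>)" by (rule real_nat_ceiling_ge)
    also have "\<dots> \<le> real N" using NN by simp
    finally have NX: "X \<le> real N" .
    define g where "g p = (if N < p*p then cnj (e (poly F (real p))) else 0)" for p
    define f where "f = cmf g"
    have ne: "\<And>x. norm (e x) = 1" by (simp add: e_def)
    have gle: "\<forall>p. norm (g p) \<le> 1" by (simp add: g_def ne)
    have t1: "f n * e (poly F (real n)) = (if prime n \<and> N < n*n then 1 else 0)" if n: "n \<in> {2..N}" for n
    proof (cases "prime n \<and> N < n*n")
      case True
      then have "f n = cnj (e (poly F (real n)))"
        by (simp add: f_def cmf_def g_def prime_factorization_prime)
      then show ?thesis using True ne complex_norm_square[of "e (poly F (real n))"]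
        by (simp add: mult.commute)
    next
      case False
      obtain q where q: "prime q" "q dvd n" "q*q \<le> N"
      proof (cases "prime n")
        case True
        with False have "n*n \<le> N" by auto
        then show thesis using that[of n] True by auto
      next
        case False
        have n2: "2 \<le> n" "n \<le> N" using n by auto
        have "\<exists>a. a dvd n \<and> a \<noteq> 1 \<and> a \<noteq> n" using False n2 unfolding prime_nat_iff by auto
        then obtain a where a: "a dvd n" "a \<noteq> 1" "a \<noteq> n" by blast
        define b where "b = n div a"
        have nab: "n = a*b" using a by (simp add: b_def)
        have a0: "a > 0" using nab n2 by (cases a) auto
        have b1: "b \<noteq> 1" using nab a by auto
        have b0: "b > 0" using nab n2 by (cases b) auto
        define c where "c = min a b"
        have c1: "c \<noteq> 1" using a b1 by (simp add: c_def min_def)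
        have cdvd: "c dvd n" using nab a by (auto simp: c_def min_def)
        have "c*c \<le> a*b" unfolding c_def by (intro mult_mono) auto
        hence ccN: "c*c \<le> N" using nab n2 by simp
        obtain q where qq: "prime q" "q dvd c" using prime_factor_nat[OF c1] by blast
        have "c > 0" using a0 b0 by (simp add: c_def)
        hence "q \<le> c" using qq by (simp add: dvd_imp_le)
        hence "q*q \<le> c*c" by (intro mult_mono) auto
        have "q dvd n" using qq(2) cdvd by (rule dvd_trans)
        moreover have "q*q \<le> N" using \<open>q*q \<le> c*c\<close> ccN by linarith
        ultimately show thesis using that qq(1) by blast
      qed
      have "q \<in># prime_factorization n" using q n by (auto simp: in_prime_factors_iff)
      hence "g q \<in># image_mset g (prime_factorization n)" by simp
      moreover have "g q = 0" using q(3) by (simp add: g_def)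
      ultimately have "f n = 0" by (simp add: f_def cmf_def)
      then show ?thesis using False by simp
    qed
    define P where "P = {n\<in>{2..N}. prime n \<and> N < n*n}"
    have "(\<Sum>n=1..N. f n * e (poly F (real n))) = f 1 * e (poly F (real 1)) + (\<Sum>n=Suc 1..N. f n * e (poly F (real n)))"
      using N3 by (intro sum.atLeast_Suc_atMost) simp
    also have "f 1 = 1" by (simp add: f_def cmf_def)
    also have "(\<Sum>n=Suc 1..N. f n * e (poly F (real n))) = (\<Sum>n\<in>{2..N}. if prime n \<and> N < n*n then 1 else 0)"
      by (intro sum.cong) (simp_all add: t1)
    also have "\<dots> = of_nat (card P)"
      unfolding P_def by (simp add: sum.inter_filter[symmetric])
    finally have sumeq: "(\<Sum>n=1..N. f n * e (poly F (real n))) = e (poly F 1) + of_nat (card P)" by simp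
    have "real (card P) = norm (of_nat (card P) :: complex)" by simp
    also have "\<dots> = norm ((e (poly F 1) + of_nat (card P)) - e (poly F 1))" by simp
    also have "\<dots> \<le> norm (e (poly F 1) + of_nat (card P)) + norm (e (poly F 1))"
      by (rule norm_triangle_ineq4)
    finally have lowP: "real (card P) - 1 \<le> norm (\<Sum>n=1..N. f n * e (poly F (real n)))"
      using sumeq ne by simp
    define \<pi> where "\<pi> = card {p. prime p \<and> p \<le> N}"
    have sub: "{p. prime p \<and> p \<le> N} \<subseteq> P \<union> {0..nat \<lfloor>sqrt (real N)\<rfloor>}"
    proof
      fix p assume "p \<in> {p. prime p \<and> p \<le> N}"
      hence pp: "prime p" "p \<le> N" by auto
      show "p \<in> P \<union> {0..nat \<lfloor>sqrt (real N)\<rfloor>}"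
      proof (cases "N < p*p")
        case True
        then show ?thesis using pp prime_ge_2_nat[OF pp(1)] by (auto simp: P_def)
      next
        case False
        hence "real p ^ 2 \<le> real N" by (simp add: power2_eq_square flip: of_nat_mult)
        hence "real p \<le> sqrt (real N)" by (rule real_le_rsqrt)
        hence "p \<le> nat \<lfloor>sqrt (real N)\<rfloor>" by (simp add: le_nat_floor)
        then show ?thesis by auto
      qed
    qed
    have "\<pi> \<le> card (P \<union> {0..nat \<lfloor>sqrt (real N)\<rfloor>})"
      unfolding \<pi>_def by (rule card_mono[OF _ sub]) (auto simp: P_def)
    also have "\<dots> \<le> card P + card {0..nat \<lfloor>sqrt (real N)\<rfloor>}" by (rule card_Un_le)
    finally have "\<pi> \<le> card P + Suc (nat \<lfloor>sqrt (real N)\<rfloor>)" by simp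
    hence "real \<pi> \<le> real (card P) + 1 + real (nat \<lfloor>sqrt (real N)\<rfloor>)" by linarith
    moreover have "real (nat \<lfloor>sqrt (real N)\<rfloor>) \<le> sqrt (real N)"
      using of_int_floor_le[of "sqrt (real N)"] by (simp add: of_nat_nat)
    ultimately have piP: "real \<pi> - sqrt (real N) - 2 \<le> real (card P) - 1" by linarith
    define m where "m = N div 2"
    have m0: "m > 0" using N3 by (simp add: m_def)
    have m2: "2*m \<le> N" "N \<le> 2*m + 1" by (auto simp: m_def)
    have "card {p. prime p \<and> p \<le> 2*m} \<le> \<pi>"
      unfolding \<pi>_def by (rule card_mono) (use m2 in \<open>auto intro: finite_subset[of _ "{..N}"]\<close>)
    have ch: "real m * ln 4 - ln (2 * real m) \<le> real (card {p. prime p \<and> p \<le> 2*m}) * ln (2 * real m)"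
      by (rule cheb_real[OF m0])
    have ln4: "1 \<le> ln (4::real)"
    proof -
      have "exp 1 \<le> (4::real)" using exp_le by linarith
      thus ?thesis by (simp add: ln_ge_iff)
    qed
    have r2m: "real N - 1 \<le> 2 * real m" "2 * real m \<le> real N" using m2 by linarith+
    have l2m: "0 \<le> ln (2 * real m)" using m0 by simp
    have lle: "ln (2 * real m) \<le> ln (real N)" using m0 r2m by simp
    have LN: "0 < ln (real N)" using N3 by simp
    have "real m \<le> real m * ln 4" using mult_left_mono[OF ln4, of "real m"] by simp
    have "(real N - 1)/2 \<le> real m" using r2m by (simp add: field_simps)
    hence "(real N - 1)/2 \<le> real m * ln 4" using \<open>real m \<le> real m * ln 4\<close> by (rule order.trans)
    hence "(real N - 1)/2 - ln (real N) \<le> real m * ln 4 - ln (2 * real m)" using lle by linarith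
    also have "\<dots> \<le> real (card {p. prime p \<and> p \<le> 2*m}) * ln (2 * real m)" by (rule ch)
    also have "\<dots> \<le> real \<pi> * ln (real N)"
      using \<open>card {p. prime p \<and> p \<le> 2*m} \<le> \<pi>\<close> l2m lle by (intro mult_mono) auto
    finally have A: "(real N - 1)/2 - ln (real N) \<le> real \<pi> * ln (real N)" .
    note XN = X[OF NX]
    have "(real \<pi> - sqrt (real N) - 2) * ln (real N) = real \<pi> * ln (real N) - (sqrt (real N) + 2) * ln (real N)"
      by (simp add: algebra_simps)
    hence key: "real N / 10 \<le> (real \<pi> - sqrt (real N) - 2) * ln (real N)" using A XN by linarith
    have "(1/10) * (real N / ln (real N)) = (real N / 10) / ln (real N)" by simp
    also have "\<dots> \<le> real \<pi> - sqrt (real N) - 2" using key LN by (simp add: pos_divide_le_eq)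
    also have "\<dots> \<le> norm (\<Sum>n=1..N. f n * e (poly F (real n)))" using piP lowP by linarith
    finally have fin: "(1/10) * (real N / ln (real N)) \<le> norm (\<Sum>n=1..N. f n * e (poly F (real n)))" .
    have fle: "\<forall>n>0. norm (f n) \<le> 1" using gle by (simp add: f_def cmf_def norm_prod_mset_le)
    show "\<exists>f :: nat \<Rightarrow> complex.
           completely_multiplicative f \<and> (\<forall>n>0. norm (f n) \<le> 1) \<and>
           norm (\<Sum>n=1..N. f n * e (poly F (real n))) \<ge> (1/10) * (real N / ln (real N))"
    proof (intro exI[of _ f] conjI)
      show "completely_multiplicative f" unfolding f_def by (rule cmf_cm)
      show "\<forall>n>0. norm (f n) \<le> 1" by (rule fle)
      show "norm (\<Sum>n=1..N. f n * e (poly F (real n))) \<ge> (1/10) * (real N / ln (real N))" by (rule fin)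
    qed
  qed
qed

end
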